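(* Let $q>0$ and $r\ge 0$ be real numbers. For every integer $n\ge 0$, $$B_n^q(r)=\sum_{k=0}^n\frac{1}{q^k\,(k+1)}\sum_{j=0}^{k}(-1)^{j}\binom{k}{j}(r+jq)^n,$$ where $B_n^q(r)$ is as defined in the context.
   Context: The Bernoulli polynomials with a $q$ parameter $B_n^q(r)$ are defined by the formal power series identity in $t$ $$\sum_{n=0}^{\infty}B_n^q(r)\frac{t^n}{n!}=\frac{q\,e^{rt}}{1-e^{qt}}\sum_{k=1}^{\infty}\left(\frac{1-e^{qt}}{q}\right)^k\frac{1}{k}.$$ *)

theory Defs
  imports "HOL-Computational_Algebra.Formal_Power_Series"
begin

definition bern_q_gf :: "real \<Rightarrow> real \<Rightarrow> real fps" where
  "bern_q_gf q r =
     (fps_const q * fps_exp r *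
       (\<Sum>k. fps_const (1 / of_nat (Suc k)) * ((1 - fps_exp q) / fps_const q) ^ Suc k))
     / (1 - fps_exp q)"

definition bern_q :: "real \<Rightarrow> nat \<Rightarrow> real \<Rightarrow> real" where
  "bern_q q n r = fact n * (fps_nth (bern_q_gf q r) n)"

end

theory Submission
  imports Defs
begin

unbundle fps_syntax

lemma mult_nth_cong:
  fixes f g h :: "real fps"
  assumes "\<And>j. j \<le> n \<Longrightarrow> g $ j = h $ j"
  shows "(f * g) $ n = (f * h) $ n"
  unfolding fps_mult_nth using assms by (intro sum.cong) auto

lemma U_eq:
  assumes "q \<noteq> (0::real)"
  shows "(1 - fps_exp q) / fps_const q = fps_const (1/q) * (1 - fps_exp q)"
proof -
  have "(1 - fps_exp q) / fps_const q = (1 - fps_exp q) * inverse (fps_const q)"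
    using assms by (intro fps_divide_unit) simp
  also have "\<dots> = fps_const (1/q) * (1 - fps_exp q)"
    by (simp add: fps_const_inverse divide_inverse mult.commute)
  finally show ?thesis .
qed

lemma main_gf:
  fixes q r :: real
  assumes q: "q \<noteq> 0"
  defines "U \<equiv> fps_const (1/q) * (1 - fps_exp q)"
  defines "B \<equiv> Abs_fps (\<lambda>n. \<Sum>k\<le>n. (fps_const (1 / of_nat (Suc k)) * U ^ k) $ n)"
  shows "bern_q_gf q r = fps_exp r * B"
proof -
  have U0: "U $ 0 = 0" unfolding U_def by simp
  have vanish: "(U ^ k) $ m = 0" if "m < k" for k m
    using startsby_zero_power_prefix[OF U0] that by blast
  let ?c = "\<lambda>k. fps_const (1 / of_nat (Suc k) :: real)"
  have Bpart: "(\<Sum>k<N. ?c k * U ^ k) $ m = B $ m" if "m < N" for N m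
  proof -
    have "(\<Sum>k<N. ?c k * U ^ k) $ m = (\<Sum>k<N. (?c k * U ^ k) $ m)"
      by (simp add: fps_sum_nth)
    also have "\<dots> = (\<Sum>k\<le>m. (?c k * U ^ k) $ m)"
      using that vanish by (intro sum.mono_neutral_right) auto
    finally show ?thesis unfolding B_def by simp
  qed
  have sums: "(\<lambda>k. ?c k * U ^ Suc k) sums (U * B)"
    unfolding sums_def tendsto_iff
  proof safe
    fix e :: real assume e: "0 < e"
    have "(\<lambda>n. inverse (2 ^ n) :: real) \<longlonglongrightarrow> 0"
      by (rule LIMSEQ_inverse_realpow_zero) simp_all
    from this and e have "eventually (\<lambda>i. inverse (2 ^ i) < e) sequentially"
      by (rule order_tendstoD)
    then obtain i where i: "inverse (2 ^ i) < (e::real)"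
      by (auto simp: eventually_sequentially)
    have "dist (\<Sum>k<N. ?c k * U ^ Suc k) (U * B) < e" if N: "N \<ge> Suc i" for N
    proof -
      have "(\<Sum>k<N. ?c k * U ^ Suc k) = U * (\<Sum>k<N. ?c k * U ^ k)"
        by (simp add: sum_distrib_left mult_ac)
      moreover have "(U * (\<Sum>k<N. ?c k * U ^ k)) $ j = (U * B) $ j" if "j \<le> i" for j
        using that N by (intro mult_nth_cong Bpart) auto
      ultimately have "dist (\<Sum>k<N. ?c k * U ^ Suc k) (U * B) < inverse (2 ^ i)"
        by (intro nth_equal_imp_dist_less) auto
      with i show ?thesis by linarith
    qed
    then show "\<forall>\<^sub>F N in sequentially. dist (\<Sum>k<N. ?c k * U ^ Suc k) (U * B) < e"
      by (auto simp: eventually_sequentially)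
  qed
  have S: "(\<Sum>k. ?c k * ((1 - fps_exp q) / fps_const q) ^ Suc k) = U * B"
    unfolding U_eq[OF q] U_def[symmetric] by (rule sums_unique[OF sums, symmetric])
  have D: "1 - fps_exp q = fps_const q * U"
    unfolding U_def using q by (simp add: mult.assoc[symmetric] fps_const_mult[symmetric])
  have nz: "fps_const q * U \<noteq> 0"
  proof -
    have "U $ 1 = -1" unfolding U_def using q by simp
    then show ?thesis using q by auto
  qed
  have "bern_q_gf q r = (fps_exp r * B) * (fps_const q * U) / (fps_const q * U)"
    unfolding bern_q_gf_def S unfolding D by (simp only: mult_ac)
  also have "\<dots> = fps_exp r * B" using nz by (rule fps_divide_times_eq)
  finally show ?thesis .
qed

lemma coeff_k:
  fixes q r :: real
  shows "(fps_exp r * (fps_const (1/q) * (1 - fps_exp q)) ^ k) $ n =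
    (1/q)^k * (\<Sum>j=0..k. (-1) ^ j * of_nat (k choose j) * (r + of_nat j * q) ^ n) / fact n"
proof -
  have bin: "(1 - fps_exp q) ^ k = (\<Sum>j\<le>k. of_nat (k choose j) * (- fps_exp q) ^ j)"
    using binomial_ring[of "- fps_exp q" "1 :: real fps" k] by simp
  have "fps_exp r * (fps_const (1/q) * (1 - fps_exp q)) ^ k
     = fps_const ((1/q)^k) * (\<Sum>j\<le>k. fps_const ((-1) ^ j * of_nat (k choose j)) * fps_exp (r + of_nat j * q))"
  proof -
    have e: "fps_exp r * (of_nat (k choose j) * (- fps_exp q) ^ j) =
          fps_const ((-1) ^ j * of_nat (k choose j)) * fps_exp (r + of_nat j * q)" for j
    proof -
      have m1: "(-1 :: real fps) ^ j = fps_const ((-1)^j)"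
        by (simp add: fps_const_power[symmetric] fps_const_neg[symmetric])
      have "(- fps_exp q) ^ j = fps_const ((-1)^j) * fps_exp (of_nat j * q)"
        unfolding power_minus[of "fps_exp q"] m1 fps_exp_power_mult ..
      moreover have "(of_nat (k choose j) :: real fps) = fps_const (of_nat (k choose j))"
        by (simp add: fps_of_nat)
      ultimately have "fps_exp r * (of_nat (k choose j) * (- fps_exp q) ^ j) =
          fps_const (of_nat (k choose j)) * fps_const ((-1)^j) * (fps_exp r * fps_exp (of_nat j * q))"
        by (simp only: ac_simps)
      also have "\<dots> = fps_const ((-1) ^ j * of_nat (k choose j)) * fps_exp (r + of_nat j * q)"
        by (simp only: fps_exp_add_mult fps_const_mult mult.commute)
      finally show ?thesis .
    qed
    have "fps_exp r * (fps_const (1/q) * (1 - fps_exp q)) ^ k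
        = fps_const ((1/q)^k) * (fps_exp r * (1 - fps_exp q) ^ k)"
      by (simp only: power_mult_distrib fps_const_power mult.left_commute)
    also have "\<dots> = fps_const ((1/q)^k) * (\<Sum>j\<le>k. fps_exp r * (of_nat (k choose j) * (- fps_exp q) ^ j))"
      unfolding bin by (simp add: sum_distrib_left)
    also have "\<dots> = fps_const ((1/q)^k) * (\<Sum>j\<le>k. fps_const ((-1) ^ j * of_nat (k choose j)) * fps_exp (r + of_nat j * q))"
      using e by simp
    finally show ?thesis .
  qed
  then have "(fps_exp r * (fps_const (1/q) * (1 - fps_exp q)) ^ k) $ n
     = (1/q)^k * (\<Sum>j\<le>k. ((-1) ^ j * of_nat (k choose j)) * ((r + of_nat j * q) ^ n / fact n))"
    by (simp add: fps_sum_nth)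
  also have "\<dots> = (1/q)^k * (\<Sum>j=0..k. (-1) ^ j * of_nat (k choose j) * (r + of_nat j * q) ^ n) / fact n"
    by (simp add: atLeast0AtMost sum_divide_distrib[symmetric])
  finally show ?thesis .
qed

lemma aux: "(fact n :: real) * (1 / of_nat (Suc k) * ((1/q)^k * S / fact n)) =
   1 / (q ^ k * of_nat (k + 1)) * S"
proof -
  have f: "(fact n :: real) \<noteq> 0" by simp
  have 1: "(fact n :: real) * (a * (b * S / fact n)) = a * b * S" for a b :: real
    using f by simp
  have 2: "1 / of_nat (Suc k) * (1/q)^k = 1 / (q ^ k * of_nat (k + 1) :: real)"
    by (simp add: power_one_over)
  show ?thesis unfolding 1 2 ..
qed

theorem mainTheorem3:
  fixes q r :: real and n :: nat
  assumes "q > 0" and "r \<ge> 0"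
  shows "bern_q q n r =
    (\<Sum>k=0..n. 1 / (q ^ k * of_nat (k + 1)) *
       (\<Sum>j=0..k. (-1) ^ j * of_nat (k choose j) * (r + of_nat j * q) ^ n))"
proof -
  have q: "q \<noteq> 0" using assms by simp
  define U where "U = fps_const (1/q) * (1 - fps_exp q)"
  define B where "B = Abs_fps (\<lambda>n. \<Sum>k\<le>n. (fps_const (1 / of_nat (Suc k)) * U ^ k) $ n)"
  let ?c = "\<lambda>k. fps_const (1 / of_nat (Suc k) :: real)"
  have gf: "bern_q_gf q r = fps_exp r * B"
    unfolding U_def B_def by (rule main_gf[OF q])
  have U0: "U $ 0 = 0" unfolding U_def by simp
  have vanish: "(U ^ k) $ m = 0" if "m < k" for k m
    using startsby_zero_power_prefix[OF U0] that by blast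
  have Bpart: "(\<Sum>k\<le>n. ?c k * U ^ k) $ m = B $ m" if "m \<le> n" for m
  proof -
    have "(\<Sum>k\<le>n. ?c k * U ^ k) $ m = (\<Sum>k\<le>n. (?c k * U ^ k) $ m)"
      by (simp add: fps_sum_nth)
    also have "\<dots> = (\<Sum>k\<le>m. (?c k * U ^ k) $ m)"
      using that vanish by (intro sum.mono_neutral_right) auto
    finally show ?thesis unfolding B_def by simp
  qed
  have "(fps_exp r * B) $ n = (fps_exp r * (\<Sum>k\<le>n. ?c k * U ^ k)) $ n"
    by (intro mult_nth_cong) (rule Bpart[symmetric])
  also have "\<dots> = (\<Sum>k\<le>n. 1 / of_nat (Suc k) * (fps_exp r * U ^ k) $ n)"
  proof -
    have "fps_exp r * (\<Sum>k\<le>n. ?c k * U ^ k) = (\<Sum>k\<le>n. ?c k * (fps_exp r * U ^ k))"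
      by (simp add: sum_distrib_left mult_ac)
    then show ?thesis by (simp add: fps_sum_nth)
  qed
  also have "\<dots> = (\<Sum>k\<le>n. 1 / of_nat (Suc k) * ((1/q)^k *
      (\<Sum>j=0..k. (-1) ^ j * of_nat (k choose j) * (r + of_nat j * q) ^ n) / fact n))"
    unfolding U_def coeff_k ..
  finally have "bern_q q n r = fact n * (\<Sum>k\<le>n. 1 / of_nat (Suc k) * ((1/q)^k *
      (\<Sum>j=0..k. (-1) ^ j * of_nat (k choose j) * (r + of_nat j * q) ^ n) / fact n))"
    unfolding bern_q_def gf by (simp only:)
  also have "\<dots> = (\<Sum>k=0..n. 1 / (q ^ k * of_nat (k + 1)) *
       (\<Sum>j=0..k. (-1) ^ j * of_nat (k choose j) * (r + of_nat j * q) ^ n))"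
    unfolding sum_distrib_left[of "fact n"] atLeast0AtMost
    by (intro sum.cong refl, rule aux)
  finally show ?thesis .
qed

end
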